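(* Let $c\in\mathbb{R}^n$ with $c_1\ge\cdots\ge c_n\ge0$ and $u\in\mathbb{R}^n$ with $u_i>0$ for all $i$. There exists an algorithm that solves the problem of minimizing $\frac12\left(\sum_{i=1}^n x_i\right)^2-\sum_{i=1}^n c_ix_i$ subject to $0\le x\le u$ in $O(n\log n)$ time.
   Context: Time is measured in arithmetic operations and comparisons on real numbers. *)

theory Defs
  imports Complex_Main
begin

text \<open>Machine state: a real memory (nat-addressed cells holding reals) and a file of
natural-number registers used for addressing and loop control.\<close>

record state =
  mem :: "nat \<Rightarrow> real"
  reg :: "nat \<Rightarrow> nat"

datatype rop = RAdd | RSub | RMul | RDiv

fun rop_sem :: "rop \<Rightarrow> real \<Rightarrow> real \<Rightarrow> real" where
  "rop_sem RAdd a b = a + b"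
| "rop_sem RSub a b = a - b"
| "rop_sem RMul a b = a * b"
| "rop_sem RDiv a b = a / b"

datatype test =
    RLess nat nat
  | RLeq nat nat
  | NLess nat nat
  | NEq nat nat

fun test_sem :: "test \<Rightarrow> state \<Rightarrow> bool" where
  "test_sem (RLess a b) s = (mem s (reg s a) < mem s (reg s b))"
| "test_sem (RLeq a b) s = (mem s (reg s a) \<le> mem s (reg s b))"
| "test_sem (NLess a b) s = (reg s a < reg s b)"
| "test_sem (NEq a b) s = (reg s a = reg s b)"

datatype com =
    Skip
  | RConst nat real
  | RCopy nat nat
  | RBin rop nat nat nat
  | NConst nat nat
  | NAdd nat nat nat
  | NSub nat nat nat         \<comment> \<open>reg d := reg a - reg b (truncated)\<close>
  | NHalf nat nat
  | Seq com com
  | If test com com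
  | While test com

definition set_mem :: "state \<Rightarrow> nat \<Rightarrow> real \<Rightarrow> state" where
  "set_mem s i r = s\<lparr>mem := (mem s)(i := r)\<rparr>"

definition set_reg :: "state \<Rightarrow> nat \<Rightarrow> nat \<Rightarrow> state" where
  "set_reg s i k = s\<lparr>reg := (reg s)(i := k)\<rparr>"

inductive exec :: "com \<Rightarrow> state \<Rightarrow> nat \<Rightarrow> state \<Rightarrow> bool" where
  "exec Skip s 0 s"
| "exec (RConst d r) s 1 (set_mem s (reg s d) r)"
| "exec (RCopy a d) s 1 (set_mem s (reg s d) (mem s (reg s a)))"
| "exec (RBin op a b d) s 1
     (set_mem s (reg s d) (rop_sem op (mem s (reg s a)) (mem s (reg s b))))"
| "exec (NConst d k) s 1 (set_reg s d k)"
| "exec (NAdd a b d) s 1 (set_reg s d (reg s a + reg s b))"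
| "exec (NSub a b d) s 1 (set_reg s d (reg s a - reg s b))"
| "exec (NHalf a d) s 1 (set_reg s d (reg s a div 2))"
| "exec c1 s t1 s1 \<Longrightarrow> exec c2 s1 t2 s2 \<Longrightarrow> exec (Seq c1 c2) s (t1 + t2) s2"
| "test_sem b s \<Longrightarrow> exec c1 s t s' \<Longrightarrow> exec (If b c1 c2) s (Suc t) s'"
| "\<not> test_sem b s \<Longrightarrow> exec c2 s t s' \<Longrightarrow> exec (If b c1 c2) s (Suc t) s'"
| "\<not> test_sem b s \<Longrightarrow> exec (While b c) s 1 s"
| "test_sem b s \<Longrightarrow> exec c s t1 s1 \<Longrightarrow> exec (While b c) s1 t2 s2
     \<Longrightarrow> exec (While b c) s (Suc (t1 + t2)) s2"

text \<open>Vectors in R^n are functions nat \<Rightarrow> real indexed by 0..n-1 (index i here is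
coordinate i+1 in the paper).  Input: register 0 holds n, memory cells 0..n-1 hold c,
cells n..2n-1 hold u, all other cells and registers are 0.  Output: cells 0..n-1 hold x.\<close>

definition init_state :: "nat \<Rightarrow> (nat \<Rightarrow> real) \<Rightarrow> (nat \<Rightarrow> real) \<Rightarrow> state" where
  "init_state n c u =
     \<lparr> mem = (\<lambda>i. if i < n then c i else if i < 2 * n then u (i - n) else 0),
       reg = (\<lambda>i. if i = 0 then n else 0) \<rparr>"

definition objective :: "nat \<Rightarrow> (nat \<Rightarrow> real) \<Rightarrow> (nat \<Rightarrow> real) \<Rightarrow> real" where
  "objective n c x = (1/2) * (\<Sum>i<n. x i)^2 - (\<Sum>i<n. c i * x i)"

definition feasible :: "nat \<Rightarrow> (nat \<Rightarrow> real) \<Rightarrow> (nat \<Rightarrow> real) \<Rightarrow> bool" where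
  "feasible n u x \<longleftrightarrow> (\<forall>i<n. 0 \<le> x i \<and> x i \<le> u i)"

definition is_minimizer :: "nat \<Rightarrow> (nat \<Rightarrow> real) \<Rightarrow> (nat \<Rightarrow> real) \<Rightarrow> (nat \<Rightarrow> real) \<Rightarrow> bool" where
  "is_minimizer n c u x \<longleftrightarrow>
     feasible n u x \<and> (\<forall>y. feasible n u y \<longrightarrow> objective n c x \<le> objective n c y)"

end

theory Submission
  imports Defs
begin

fun Tsum :: "(nat \<Rightarrow> real) \<Rightarrow> (nat \<Rightarrow> real) \<Rightarrow> nat \<Rightarrow> real" where
  "Tsum c u 0 = 0"
| "Tsum c u (Suc k) = Tsum c u k + min (u k) (max 0 (c k - Tsum c u k))"

definition xv :: "(nat \<Rightarrow> real) \<Rightarrow> (nat \<Rightarrow> real) \<Rightarrow> nat \<Rightarrow> real" where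
  "xv c u k = min (u k) (max 0 (c k - Tsum c u k))"

lemma Tsum_Suc': "Tsum c u (Suc k) = Tsum c u k + xv c u k"
  by (simp add: xv_def)

declare Tsum.simps(2)[simp del]

lemma xv_nonneg: "0 \<le> u k \<Longrightarrow> 0 \<le> xv c u k"
  by (simp add: xv_def)

lemma Tsum_mono:
  assumes "\<forall>i<n. 0 < u i" "j \<le> k" "k \<le> n"
  shows "Tsum c u j \<le> Tsum c u k"
  using assms(2,3)
proof (induction k)
  case 0 then show ?case by simp
next
  case (Suc k)
  show ?case
  proof (cases "j = Suc k")
    case False
    then have "Tsum c u j \<le> Tsum c u k" using Suc by simp
    moreover have "0 \<le> xv c u k" using assms(1) Suc.prems by (intro xv_nonneg) (auto intro: less_imp_le)
    ultimately show ?thesis by (simp add: Tsum_Suc')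
  qed simp
qed

lemma sum_xv: "(\<Sum>i<n. xv c u i) = Tsum c u n"
  by (induction n) (simp_all add: Tsum_Suc')

lemma kkt1:
  assumes u: "\<forall>i<n. 0 < u i" and c: "\<forall>i j. i \<le> j \<longrightarrow> j < n \<longrightarrow> c j \<le> c i"
    and k: "k < n" and pos: "xv c u k > 0"
  shows "Tsum c u n \<le> c k"
proof -
  have "\<And>j. k < j \<Longrightarrow> j \<le> n \<Longrightarrow> Tsum c u j \<le> c k"
  proof -
    fix j assume "k < j" "j \<le> n"
    then show "Tsum c u j \<le> c k"
    proof (induction j)
      case 0 then show ?case by simp
    next
      case (Suc j)
      show ?case
      proof (cases "j = k")
        case True
        then show ?thesis using pos by (auto simp: Tsum_Suc' xv_def)
      next
        case False
        then have ih: "Tsum c u j \<le> c k" using Suc by simp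
        show ?thesis
        proof (cases "xv c u j > 0")
          case True
          then have "Tsum c u (Suc j) \<le> c j" by (auto simp: Tsum_Suc' xv_def)
          moreover have "c j \<le> c k" using c Suc.prems by auto
          ultimately show ?thesis by simp
        next
          case False
          have "0 \<le> u j" using u Suc.prems by (auto intro: less_imp_le)
          then have "xv c u j = 0" using xv_nonneg[of u j c] False by linarith
          then show ?thesis using ih by (simp add: Tsum_Suc')
        qed
      qed
    qed
  qed
  then show ?thesis using k by simp
qed

lemma kkt2:
  assumes u: "\<forall>i<n. 0 < u i" and k: "k < n" and lt: "xv c u k < u k"
  shows "c k \<le> Tsum c u n"
proof -
  have "c k \<le> Tsum c u (Suc k)" using lt by (auto simp: Tsum_Suc' xv_def)
  also have "\<dots> \<le> Tsum c u n" using Tsum_mono[OF u, of "Suc k" n] k by simp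
  finally show ?thesis .
qed

lemma optimal:
  assumes u: "\<forall>i<n. 0 < u i" and c: "\<forall>i j. i \<le> j \<longrightarrow> j < n \<longrightarrow> c j \<le> c i"
    and x: "\<forall>i<n. x i = xv c u i"
  shows "is_minimizer n c u x"
proof -
  define S where "S = Tsum c u n"
  have sx: "(\<Sum>i<n. x i) = S" using x sum_xv unfolding S_def
    by (metis (no_types, lifting) lessThan_iff sum.cong)
  have feas: "feasible n u x" unfolding feasible_def
    using x u by (auto simp: xv_def)
  have "objective n c x \<le> objective n c y" if fy: "feasible n u y" for y
  proof -
    have trm: "0 \<le> (S - c i) * (y i - x i)" if i: "i < n" for i
    proof (cases "y i - x i" "0::real" rule: linorder_cases)
      case less
      then have "x i > 0" using fy i unfolding feasible_def by force
      then have "S \<le> c i" using kkt1[OF u c i] x i unfolding S_def by simp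
      then show ?thesis using less by (simp add: mult_nonpos_nonpos)
    next
      case greater
      then have "x i < u i" using fy i unfolding feasible_def by force
      then have "c i \<le> S" using kkt2[OF u i] x i unfolding S_def by simp
      then show ?thesis using greater by simp
    qed simp
    define Sy where "Sy = (\<Sum>i<n. y i)"
    have "0 \<le> (\<Sum>i<n. (S - c i) * (y i - x i))" using trm by (intro sum_nonneg) auto
    also have "\<dots> = S * Sy - S * S - (\<Sum>i<n. c i * y i) + (\<Sum>i<n. c i * x i)"
    proof -
      have "(\<Sum>i<n. (S - c i) * (y i - x i)) = (\<Sum>i<n. S * y i - S * x i - c i * y i + c i * x i)"
        by (intro sum.cong) (auto simp: algebra_simps)
      also have "\<dots> = S * (\<Sum>i<n. y i) - S * (\<Sum>i<n. x i) - (\<Sum>i<n. c i * y i) + (\<Sum>i<n. c i * x i)"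
        by (simp add: sum.distrib sum_subtractf sum_distrib_left)
      finally show ?thesis by (simp add: sx Sy_def)
    qed
    finally have "0 \<le> S * Sy - S * S - (\<Sum>i<n. c i * y i) + (\<Sum>i<n. c i * x i)" .
    moreover have "0 \<le> (Sy - S)^2" by simp
    ultimately show ?thesis unfolding objective_def sx Sy_def[symmetric]
      by (simp add: power2_eq_square algebra_simps)
  qed
  then show ?thesis using feas unfolding is_minimizer_def by blast
qed


definition body :: com where
  "body = Seq (RBin RSub 1 3 4) (Seq (If (RLess 4 6) (RConst 4 0) (NConst 7 0))
     (Seq (If (RLess 2 4) (RCopy 2 4) (NConst 7 0)) (Seq (RCopy 4 1)
     (Seq (RBin RAdd 3 4 3) (Seq (NAdd 1 5 1) (NAdd 2 5 2))))))"

definition init :: com where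
  "init = Seq (NConst 5 1) (Seq (NAdd 0 0 3) (Seq (NAdd 3 5 4) (Seq (NAdd 4 5 6) (NAdd 0 1 2))))"

definition prog :: com where
  "prog = Seq init (While (NLess 1 0) body)"

definition Inv :: "nat \<Rightarrow> (nat \<Rightarrow> real) \<Rightarrow> (nat \<Rightarrow> real) \<Rightarrow> nat \<Rightarrow> state \<Rightarrow> bool" where
  "Inv n c u k s \<longleftrightarrow> reg s 0 = n \<and> reg s 1 = k \<and> reg s 2 = n + k \<and> reg s 3 = 2 * n
     \<and> reg s 4 = 2 * n + 1 \<and> reg s 5 = 1 \<and> reg s 6 = 2 * n + 2
     \<and> (\<forall>i<k. mem s i = xv c u i) \<and> (\<forall>i. k \<le> i \<and> i < n \<longrightarrow> mem s i = c i)
     \<and> (\<forall>i<n. mem s (n + i) = u i) \<and> mem s (2 * n) = Tsum c u k \<and> mem s (2 * n + 2) = 0"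

lemma ex_RBin: "exec (RBin op a b d) s 1
     (set_mem s (reg s d) (rop_sem op (mem s (reg s a)) (mem s (reg s b))))"
  by (rule exec.intros)
lemma ex_RConst: "exec (RConst d r) s 1 (set_mem s (reg s d) r)" by (rule exec.intros)
lemma ex_RCopy: "exec (RCopy a d) s 1 (set_mem s (reg s d) (mem s (reg s a)))" by (rule exec.intros)
lemma ex_NConst: "exec (NConst d k) s 1 (set_reg s d k)" by (rule exec.intros)
lemma ex_NAdd: "exec (NAdd a b d) s 1 (set_reg s d (reg s a + reg s b))" by (rule exec.intros)
lemma ex_Seq: "exec c1 s t1 s1 \<Longrightarrow> exec c2 s1 t2 s2 \<Longrightarrow> exec (Seq c1 c2) s (t1 + t2) s2"
  by (rule exec.intros)
lemma ex_If: "exec c1 s t s1 \<Longrightarrow> exec c2 s t s2 \<Longrightarrow>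
    exec (If b c1 c2) s (Suc t) (if test_sem b s then s1 else s2)"
  by (cases "test_sem b s") (auto intro: exec.intros)

lemma mem_set_mem[simp]: "mem (set_mem s i r) = (mem s)(i := r)" by (simp add: set_mem_def)
lemma reg_set_mem[simp]: "reg (set_mem s i r) = reg s" by (simp add: set_mem_def)
lemma mem_set_reg[simp]: "mem (set_reg s i r) = mem s" by (simp add: set_reg_def)
lemma reg_set_reg[simp]: "reg (set_reg s i r) = (reg s)(i := r)" by (simp add: set_reg_def)

lemma body_step:
  assumes inv: "Inv n c u k s" and k: "k < n"
  shows "\<exists>s'. exec body s 9 s' \<and> Inv n c u (Suc k) s'"
proof -
  let ?T = "Tsum c u k"
  have r: "reg s 0 = n" "reg s 1 = k" "reg s 2 = n + k" "reg s 3 = 2 * n"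
     "reg s 4 = 2 * n + 1" "reg s 5 = 1" "reg s 6 = 2 * n + 2"
    using inv unfolding Inv_def by auto
  have m: "mem s k = c k" "mem s (n + k) = u k" "mem s (2 * n) = ?T" "mem s (2 * n + 2) = 0"
    using inv k unfolding Inv_def by auto
  define s1 where "s1 = set_mem s (reg s 4) (rop_sem RSub (mem s (reg s 1)) (mem s (reg s 3)))"
  have e1: "exec (RBin RSub 1 3 4) s 1 s1" unfolding s1_def by (rule ex_RBin)
  have r1: "reg s1 = reg s" unfolding s1_def by simp
  have m1: "mem s1 = (mem s)(2 * n + 1 := c k - ?T)" unfolding s1_def using r m by simp
  define s2 where "s2 = (if test_sem (RLess 4 6) s1 then set_mem s1 (reg s1 4) 0 else set_reg s1 7 0)"
  have e2: "exec (If (RLess 4 6) (RConst 4 0) (NConst 7 0)) s1 (Suc 1) s2"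
    unfolding s2_def by (rule ex_If[OF ex_RConst ex_NConst])
  have r2: "\<forall>i. i \<noteq> 7 \<longrightarrow> reg s2 i = reg s i" unfolding s2_def using r1 by auto
  have m2: "mem s2 = (mem s)(2 * n + 1 := max 0 (c k - ?T))"
    unfolding s2_def using r1 m1 r m by auto
  define s3 where "s3 = (if test_sem (RLess 2 4) s2 then set_mem s2 (reg s2 4) (mem s2 (reg s2 2)) else set_reg s2 7 0)"
  have e3: "exec (If (RLess 2 4) (RCopy 2 4) (NConst 7 0)) s2 (Suc 1) s3"
    unfolding s3_def by (rule ex_If[OF ex_RCopy ex_NConst])
  have r3: "\<forall>i. i \<noteq> 7 \<longrightarrow> reg s3 i = reg s i" unfolding s3_def using r2 by auto
  have m3: "mem s3 = (mem s)(2 * n + 1 := xv c u k)"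
  proof -
    have a: "reg s2 2 = n + k" "reg s2 4 = 2 * n + 1" using r2 r by auto
    have b: "mem s2 (n + k) = u k" "mem s2 (2 * n + 1) = max 0 (c k - ?T)"
      using m2 m k by auto
    show ?thesis
    proof (cases "u k < max 0 (c k - ?T)")
      case True
      then show ?thesis unfolding s3_def using a b m2 by (simp add: xv_def)
    next
      case False
      then show ?thesis unfolding s3_def using a b m2 by (simp add: xv_def min_def)
    qed
  qed
  define s4 where "s4 = set_mem s3 (reg s3 1) (mem s3 (reg s3 4))"
  have e4: "exec (RCopy 4 1) s3 1 s4" unfolding s4_def by (rule ex_RCopy)
  have r4: "\<forall>i. i \<noteq> 7 \<longrightarrow> reg s4 i = reg s i" unfolding s4_def using r3 by auto
  have m4: "mem s4 = (mem s)(2 * n + 1 := xv c u k, k := xv c u k)"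
    unfolding s4_def using r3 m3 r by auto
  define s5 where "s5 = set_mem s4 (reg s4 3) (rop_sem RAdd (mem s4 (reg s4 3)) (mem s4 (reg s4 4)))"
  have e5: "exec (RBin RAdd 3 4 3) s4 1 s5" unfolding s5_def by (rule ex_RBin)
  have r5: "\<forall>i. i \<noteq> 7 \<longrightarrow> reg s5 i = reg s i" unfolding s5_def using r4 by auto
  have m5: "mem s5 = (mem s)(2 * n + 1 := xv c u k, k := xv c u k, 2 * n := Tsum c u (Suc k))"
    unfolding s5_def using r4 m4 r m k by (auto simp: Tsum_Suc')
  define s6 where "s6 = set_reg s5 1 (reg s5 1 + reg s5 5)"
  have e6: "exec (NAdd 1 5 1) s5 1 s6" unfolding s6_def by (rule ex_NAdd)
  define s7 where "s7 = set_reg s6 2 (reg s6 2 + reg s6 5)"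
  have e7: "exec (NAdd 2 5 2) s6 1 s7" unfolding s7_def by (rule ex_NAdd)
  have m7: "mem s7 = mem s5" unfolding s7_def s6_def by simp
  have r7: "\<forall>i. i \<noteq> 7 \<longrightarrow> i \<noteq> 1 \<longrightarrow> i \<noteq> 2 \<longrightarrow> reg s7 i = reg s i"
     "reg s7 1 = Suc k" "reg s7 2 = n + Suc k"
    unfolding s7_def s6_def using r5 r by auto
  have ex: "exec body s 9 s7"
    unfolding body_def using ex_Seq[OF e1 ex_Seq[OF e2 ex_Seq[OF e3 ex_Seq[OF e4 ex_Seq[OF e5 ex_Seq[OF e6 e7]]]]]]
    by (simp add: eval_nat_numeral)
  have "Inv n c u (Suc k) s7"
    unfolding Inv_def
  proof (intro conjI allI impI)
    show "reg s7 0 = n" "reg s7 1 = Suc k" "reg s7 2 = n + Suc k" "reg s7 3 = 2 * n"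
      "reg s7 4 = 2 * n + 1" "reg s7 5 = 1" "reg s7 6 = 2 * n + 2"
      using r7 r by auto
  next
    fix i assume "i < Suc k"
    then show "mem s7 i = xv c u i" using inv k unfolding m7 m5 Inv_def by auto
  next
    fix i assume "Suc k \<le> i \<and> i < n"
    then show "mem s7 i = c i" using inv k unfolding m7 m5 Inv_def by auto
  next
    fix i assume "i < n"
    then show "mem s7 (n + i) = u i" using inv k unfolding m7 m5 Inv_def by auto
  next
    show "mem s7 (2 * n) = Tsum c u (Suc k)" unfolding m7 m5 by simp
    show "mem s7 (2 * n + 2) = 0" using m k unfolding m7 m5 by simp
  qed
  then show ?thesis using ex by blast
qed


lemma loop:
  assumes "Inv n c u k s" "k \<le> n"
  shows "\<exists>s'. exec (While (NLess 1 0) body) s (10 * (n - k) + 1) s' \<and> Inv n c u n s'"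
  using assms
proof (induction "n - k" arbitrary: k s)
  case 0
  then have k: "k = n" by simp
  have "\<not> test_sem (NLess 1 0) s" using 0 k unfolding Inv_def by simp
  then have "exec (While (NLess 1 0) body) s 1 s" by (rule exec.intros)
  then show ?case using 0 k by auto
next
  case (Suc m)
  then have k: "k < n" by simp
  obtain s1 where e1: "exec body s 9 s1" and i1: "Inv n c u (Suc k) s1"
    using body_step[OF Suc.prems(1) k] by blast
  obtain s2 where e2: "exec (While (NLess 1 0) body) s1 (10 * (n - Suc k) + 1) s2"
    and i2: "Inv n c u n s2"
  proof -
    have "m = n - Suc k" using Suc.hyps(2) by arith
    then show ?thesis using Suc.hyps(1)[of "Suc k" s1] i1 k that by auto
  qed
  have t: "test_sem (NLess 1 0) s" using Suc.prems k unfolding Inv_def by simp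
  have "exec (While (NLess 1 0) body) s (Suc (9 + (10 * (n - Suc k) + 1))) s2"
    by (rule exec.intros(13)[OF t e1 e2])
  moreover have "Suc (9 + (10 * (n - Suc k) + 1)) = 10 * (n - k) + 1" using k by simp
  ultimately show ?case using i2 by metis
qed

lemma init_step: "\<exists>s. exec init (init_state n c u) 5 s \<and> Inv n c u 0 s"
proof -
  let ?s0 = "init_state n c u"
  define s1 where "s1 = set_reg ?s0 5 1"
  define s2 where "s2 = set_reg s1 3 (reg s1 0 + reg s1 0)"
  define s3 where "s3 = set_reg s2 4 (reg s2 3 + reg s2 5)"
  define s4 where "s4 = set_reg s3 6 (reg s3 4 + reg s3 5)"
  define s5 where "s5 = set_reg s4 2 (reg s4 0 + reg s4 1)"
  have e: "exec init ?s0 (1 + (1 + (1 + (1 + 1)))) s5"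
  proof -
    have e1: "exec (NConst 5 1) ?s0 1 s1" unfolding s1_def by (rule ex_NConst)
    have e2: "exec (NAdd 0 0 3) s1 1 s2" unfolding s2_def by (rule ex_NAdd)
    have e3: "exec (NAdd 3 5 4) s2 1 s3" unfolding s3_def by (rule ex_NAdd)
    have e4: "exec (NAdd 4 5 6) s3 1 s4" unfolding s4_def by (rule ex_NAdd)
    have e5: "exec (NAdd 0 1 2) s4 1 s5" unfolding s5_def by (rule ex_NAdd)
    show ?thesis unfolding init_def
      by (rule ex_Seq[OF e1 ex_Seq[OF e2 ex_Seq[OF e3 ex_Seq[OF e4 e5]]]])
  qed
  have m: "mem s5 = mem ?s0" unfolding s5_def s4_def s3_def s2_def s1_def by simp
  have "Inv n c u 0 s5"
    unfolding Inv_def m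
    by (simp add: s5_def s4_def s3_def s2_def s1_def init_state_def)
  then show ?thesis using e by (auto simp: eval_nat_numeral)
qed

lemma ln2: "ln (2::real) \<ge> 1/2"
proof -
  have "ln (1/2::real) \<le> 1/2 - 1" by (rule ln_le_minus_one) simp
  then show ?thesis by (simp add: ln_div)
qed

theorem theorem5:
  "\<exists>P :: com. \<exists>K :: real.
     \<forall>n :: nat. \<forall>c u :: nat \<Rightarrow> real.
       (\<forall>i j. i \<le> j \<longrightarrow> j < n \<longrightarrow> c j \<le> c i) \<longrightarrow>
       (\<forall>i<n. 0 \<le> c i) \<longrightarrow>
       (\<forall>i<n. 0 < u i) \<longrightarrow>
       (\<exists>t s'. exec P (init_state n c u) t s' \<and>
              is_minimizer n c u (mem s') \<and>
              (2 \<le> n \<longrightarrow> real t \<le> K * real n * ln (real n)))"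
proof (rule exI[of _ prog], rule exI[of _ 26], intro allI impI)
  fix n :: nat and c u :: "nat \<Rightarrow> real"
  assume c: "\<forall>i j. i \<le> j \<longrightarrow> j < n \<longrightarrow> c j \<le> c i" and "\<forall>i<n. 0 \<le> c i"
    and u: "\<forall>i<n. 0 < u i"
  obtain s1 where e1: "exec init (init_state n c u) 5 s1" and i1: "Inv n c u 0 s1"
    using init_step by blast
  obtain s2 where e2: "exec (While (NLess 1 0) body) s1 (10 * (n - 0) + 1) s2"
    and i2: "Inv n c u n s2"
    using loop[OF i1] by blast
  have e: "exec prog (init_state n c u) (5 + (10 * (n - 0) + 1)) s2"
    unfolding prog_def by (rule ex_Seq[OF e1 e2])
  have opt: "is_minimizer n c u (mem s2)"
    using optimal[OF u c] i2 unfolding Inv_def by blast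
  have bound: "real (5 + (10 * (n - 0) + 1)) \<le> 26 * real n * ln (real n)" if n2: "2 \<le> n"
  proof -
    have "ln (2::real) \<le> ln (real n)" using n2 by simp
    then have l: "1/2 \<le> ln (real n)" using ln2 by linarith
    have "real (5 + (10 * (n - 0) + 1)) = 10 * real n + 6" by simp
    also have "\<dots> \<le> 13 * real n" using n2 by simp
    also have "\<dots> = 26 * real n * (1/2)" by simp
    also have "\<dots> \<le> 26 * real n * ln (real n)"
      using l by (intro mult_left_mono) auto
    finally show ?thesis .
  qed
  show "\<exists>t s'. exec prog (init_state n c u) t s' \<and> is_minimizer n c u (mem s') \<and>
       (2 \<le> n \<longrightarrow> real t \<le> 26 * real n * ln (real n))"
    using e opt bound by blast
qed

end
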